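(* Let $q$ be a prime power and $f:\mathbb{F}_q\to\mathbb{F}_q$ be differentially $d$-uniform. Then \[\sum_{r=1}^{d} r(d+1-r)M_r(f)\geq d \qquad (1)\] and \[\sum_{r=1}^{d+1} r(d+2-r)M_r(f)\geq q+d. \qquad (2)\] Equality holds in (1) if and only if $N(f)=(d+1)q-d$ and $M_r(f)=0$ for all $r\geq d+2$. Equality holds in (2) if and only if $N(f)=(d+1)q-d$ and $M_r(f)=0$ for all $r>d+2$; in that case \[\sum_{r=1}^{d} r(d+1-r)M_r(f)=(d+2)M_{d+2}(f)+d.\]
   Context: A map $f:\mathbb{F}_q\to\mathbb{F}_q$ is called differentially $d$-uniform ($d$-uniform) if $d=\max_{a\neq 0,\,b\in\mathbb{F}_q}|\{x\in\mathbb{F}_q: f(x+a)-f(x)=b\}|$. For $r\geq 1$, $M_r(f)$ denotes the number of $y\in\mathbb{F}_q$ with exactly $r$ preimages under $f$. $N(f)$ denotes the number of pairs $(x,y)\in\mathbb{F}_q^2$ with $f(x)=f(y)$. *)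

theory Defs
  imports Main
begin

text \<open>The finite field F_q is modelled as a type of class finite field; q = CARD('a),
  which is automatically a prime power.\<close>

definition diff_count :: "('a::field \<Rightarrow> 'a) \<Rightarrow> 'a \<Rightarrow> 'a \<Rightarrow> nat" where
  "diff_count f a b = card {x. f (x + a) - f x = b}"

definition diff_uniform :: "('a::{finite,field} \<Rightarrow> 'a) \<Rightarrow> nat \<Rightarrow> bool" where
  "diff_uniform f d \<longleftrightarrow> d = Max {diff_count f a b | a b. a \<noteq> 0}"

definition M :: "nat \<Rightarrow> ('a::finite \<Rightarrow> 'b) \<Rightarrow> nat" where
  "M r f = card {y. card (f -` {y}) = r}"

definition N :: "('a::finite \<Rightarrow> 'b) \<Rightarrow> nat" where
  "N f = card {(x, y). f x = f y}"

end

theory Submission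
  imports Defs
begin

lemma sum_M:
  fixes f :: "'a::finite \<Rightarrow> 'b::finite" and g :: "nat \<Rightarrow> nat"
  assumes "finite A"
  shows "(\<Sum>r\<in>A. g r * M r f) = (\<Sum>y\<in>{y. card (f -` {y}) \<in> A}. g (card (f -` {y})))"
proof -
  let ?c = "\<lambda>y. card (f -` {y})"
  have "(\<Sum>y\<in>{y. ?c y \<in> A}. g (?c y)) = (\<Sum>r\<in>A. \<Sum>y\<in>{y. y \<in> {y. ?c y \<in> A} \<and> ?c y = r}. g (?c y))"
    by (rule sum.group[symmetric]) (use assms in auto)
  also have "\<dots> = (\<Sum>r\<in>A. g r * M r f)"
  proof (rule sum.cong)
    fix r assume r: "r \<in> A"
    have "{y. y \<in> {y. ?c y \<in> A} \<and> ?c y = r} = {y. ?c y = r}" using r by auto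
    then have "(\<Sum>y\<in>{y. y \<in> {y. ?c y \<in> A} \<and> ?c y = r}. g (?c y)) = (\<Sum>y\<in>{y. ?c y = r}. g r)"
      by simp
    also have "\<dots> = g r * M r f" by (simp add: M_def)
    finally show "(\<Sum>y\<in>{y. y \<in> {y. ?c y \<in> A} \<and> ?c y = r}. g (?c y)) = g r * M r f" .
  qed simp
  finally show ?thesis by simp
qed

lemma sum_card_pre:
  fixes f :: "'a::finite \<Rightarrow> 'b::finite"
  shows "(\<Sum>y\<in>UNIV. card (f -` {y})) = card (UNIV::'a set)"
proof -
  have "(\<Sum>y\<in>UNIV. \<Sum>x\<in>{x. x \<in> (UNIV::'a set) \<and> f x = y}. (1::nat)) = (\<Sum>x\<in>(UNIV::'a set). 1)"
    by (rule sum.group) auto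
  moreover have "\<And>y. {x. x \<in> (UNIV::'a set) \<and> f x = y} = f -` {y}" by auto
  ultimately show ?thesis by simp
qed

lemma N_sq:
  fixes f :: "'a::finite \<Rightarrow> 'b::finite"
  shows "(\<Sum>y\<in>UNIV. card (f -` {y}) ^ 2) = N f"
proof -
  let ?S = "{(x, y). f x = f y}"
  have "(\<Sum>y\<in>UNIV. \<Sum>p\<in>{p. p \<in> ?S \<and> f (fst p) = y}. (1::nat)) = (\<Sum>p\<in>?S. 1)"
    by (rule sum.group) auto
  moreover have "\<And>y. {p. p \<in> ?S \<and> f (fst p) = y} = f -` {y} \<times> f -` {y}" by auto
  ultimately show ?thesis by (simp add: N_def card_cartesian_product power2_eq_square)
qed

lemma N_diff:
  fixes f :: "'a::{finite,field} \<Rightarrow> 'a"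
  shows "N f = (\<Sum>a\<in>UNIV. card {x. f (x + a) = f x})"
proof -
  let ?S = "{(x, y). f x = f y}"
  have "(\<Sum>a\<in>UNIV. \<Sum>p\<in>{p. p \<in> ?S \<and> (\<lambda>(x,y). y - x) p = a}. (1::nat)) = (\<Sum>p\<in>?S. 1)"
    by (rule sum.group) auto
  moreover have "{p. p \<in> ?S \<and> (\<lambda>(x,y). y - x) p = a} = (\<lambda>x. (x, x + a)) ` {x. f (x + a) = f x}" for a
    by (auto simp: image_def algebra_simps)
  moreover have "card ((\<lambda>x. (x, x + a)) ` {x. f (x + a) = f x}) = card {x. f (x + a) = f x}" for a
    by (rule card_image) (auto simp: inj_on_def)
  ultimately show ?thesis by (simp add: N_def)
qed

lemma N_bound:
  fixes f :: "'a::{finite,field} \<Rightarrow> 'a"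
  assumes "diff_uniform f d"
  shows "N f \<le> card (UNIV::'a set) + (card (UNIV::'a set) - 1) * d"
proof -
  have le: "card {x. f (x + a) = f x} \<le> d" if "a \<noteq> 0" for a
  proof -
    have "card {x. f (x + a) = f x} = diff_count f a 0" by (simp add: diff_count_def)
    also have "\<dots> \<le> Max {diff_count f a b | a b. a \<noteq> 0}"
    proof (rule Max_ge)
      show "finite {diff_count f a b | a b. a \<noteq> 0}"
        by (rule finite_subset[of _ "(\<lambda>(a,b). diff_count f a b) ` UNIV"]) auto
    qed (use that in auto)
    finally show ?thesis using assms by (simp add: diff_uniform_def)
  qed
  have "N f = (\<Sum>a\<in>UNIV. card {x. f (x + a) = f x})" by (rule N_diff)
  also have "\<dots> = card {x. f (x + 0) = f x} + (\<Sum>a\<in>UNIV - {0}. card {x. f (x + a) = f x})"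
    by (simp add: sum.remove[of UNIV 0])
  also have "\<dots> \<le> card (UNIV::'a set) + (\<Sum>a\<in>(UNIV::'a set) - {0}. d)"
  proof (rule add_mono)
    show "card {x. f (x + 0) = f x} \<le> card (UNIV::'a set)" by (rule card_mono) auto
    show "(\<Sum>a\<in>UNIV - {0}. card {x. f (x + a) = f x}) \<le> (\<Sum>a\<in>(UNIV::'a set) - {0}. d)"
      by (rule sum_mono) (use le in auto)
  qed
  also have "\<dots> = card (UNIV::'a set) + (card (UNIV::'a set) - 1) * d"
    by (simp add: card_Diff_subset)
  finally show ?thesis .
qed

definition E :: "nat \<Rightarrow> nat \<Rightarrow> int" where
  "E m c = (if c > m + 1 then int c * (int c - int (m + 1)) else 0)"

lemma E_nonneg: "E m c \<ge> 0"
  by (simp add: E_def)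

lemma h_int:
  "int (if c \<in> {1..m} then c * (m + 1 - c) else 0) = int (m + 1) * int c - int c ^ 2 + E m c"
proof (cases "c \<le> m")
  case True
  then show ?thesis
  proof -
    have "int (c * (m + 1 - c)) = int c * (int m + 1 - int c)"
      using True by (simp add: of_nat_diff)
    then show ?thesis using True
      by (cases "c = 0") (auto simp: E_def algebra_simps power2_eq_square)
  qed
next
  case False
  then show ?thesis
    by (cases "c = m + 1") (auto simp: E_def algebra_simps power2_eq_square)
qed

lemma main_sum:
  fixes f :: "'a::finite \<Rightarrow> 'b::finite"
  shows "int (\<Sum>r=1..m. r * (m + 1 - r) * M r f)
     = int (m + 1) * int (card (UNIV::'a set)) - int (N f) + (\<Sum>y\<in>UNIV. E m (card (f -` {y})))"
proof -
  let ?c = "\<lambda>y. card (f -` {y})"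
  have 1: "(\<Sum>r=1..m. r * (m + 1 - r) * M r f) = (\<Sum>y\<in>{y. ?c y \<in> {1..m}}. ?c y * (m + 1 - ?c y))"
    using sum_M[of "{1..m}" "\<lambda>r. r * (m + 1 - r)" f] by simp
  have 2: "(\<Sum>y\<in>{y. ?c y \<in> {1..m}}. ?c y * (m + 1 - ?c y)) = (\<Sum>y\<in>UNIV. if ?c y \<in> {1..m} then ?c y * (m + 1 - ?c y) else 0)"
    using sum.inter_filter[of UNIV "\<lambda>y. ?c y * (m + 1 - ?c y)" "\<lambda>y. ?c y \<in> {1..m}"] by simp
  have 3: "(\<Sum>y\<in>UNIV. int (?c y)) = int (card (UNIV::'a set))"
    using sum_card_pre[of f] by (simp only: of_nat_sum[symmetric])
  have 4: "(\<Sum>y\<in>UNIV. int (?c y) ^ 2) = int (N f)"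
    using N_sq[of f] by (simp only: of_nat_sum[symmetric] of_nat_power[symmetric])
  have 5: "int (\<Sum>y\<in>UNIV. if ?c y \<in> {1..m} then ?c y * (m + 1 - ?c y) else 0)
     = (\<Sum>y\<in>UNIV. int (m + 1) * int (?c y) - int (?c y) ^ 2 + E m (?c y))"
    unfolding of_nat_sum by (rule sum.cong[OF refl]) (rule h_int)
  have 6: "(\<Sum>y\<in>UNIV. int (m + 1) * int (?c y) - int (?c y) ^ 2 + E m (?c y))
     = int (m + 1) * (\<Sum>y\<in>UNIV. int (?c y)) - (\<Sum>y\<in>UNIV. int (?c y) ^ 2) + (\<Sum>y\<in>UNIV. E m (?c y))"
    by (simp only: sum.distrib sum_subtractf sum_distrib_left)
  show ?thesis using 1 2 3 4 5 6 by simp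
qed

lemma M_zero:
  fixes f :: "'a::finite \<Rightarrow> 'b::finite"
  shows "M r f = 0 \<longleftrightarrow> (\<forall>y. card (f -` {y}) \<noteq> r)"
  unfolding M_def by (subst card_0_eq) auto

lemma E_zero: "E m c = 0 \<longleftrightarrow> c \<le> m + 1"
proof (cases "c \<le> m + 1")
  case False
  then have "int c * (int c - int (m + 1)) > 0" by (intro mult_pos_pos) auto
  then show ?thesis using False by (simp add: E_def)
qed (simp add: E_def)

lemma E_zero_iff:
  fixes f :: "'a::finite \<Rightarrow> 'b::finite"
  shows "(\<Sum>y\<in>UNIV. E m (card (f -` {y}))) = 0 \<longleftrightarrow> (\<forall>r. r > m + 1 \<longrightarrow> M r f = 0)"
proof -
  have "(\<Sum>y\<in>UNIV. E m (card (f -` {y}))) = 0 \<longleftrightarrow> (\<forall>y. E m (card (f -` {y})) = 0)"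
    by (simp add: sum_nonneg_eq_0_iff E_nonneg)
  also have "\<dots> \<longleftrightarrow> (\<forall>y. card (f -` {y}) \<le> m + 1)"
    by (simp only: E_zero)
  also have "\<dots> \<longleftrightarrow> (\<forall>r. r > m + 1 \<longrightarrow> (\<forall>y. card (f -` {y}) \<noteq> r))"
    by (metis not_le)
  finally show ?thesis by (simp only: M_zero)
qed

lemma E_le: "c \<le> m + 2 \<Longrightarrow> E m c = (if c = m + 2 then int (m + 2) else 0)"
  by (auto simp: E_def)

lemma E_last:
  fixes f :: "'a::finite \<Rightarrow> 'b::finite"
  assumes "\<forall>y. card (f -` {y}) \<le> m + 2"
  shows "(\<Sum>y\<in>UNIV. E m (card (f -` {y}))) = int ((m + 2) * M (m + 2) f)"
proof -
  have "(\<Sum>y\<in>UNIV. E m (card (f -` {y}))) = (\<Sum>y\<in>UNIV. if card (f -` {y}) = m + 2 then int (m + 2) else 0)"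
    proof (rule sum.cong[OF refl])
    fix y
    show "E m (card (f -` {y})) = (if card (f -` {y}) = m + 2 then int (m + 2) else 0)"
      by (rule E_le) (use assms in blast)
  qed
  also have "\<dots> = int (m + 2) * int (card {y. card (f -` {y}) = m + 2})"
    by (simp add: sum.If_cases)
  finally show ?thesis by (simp add: M_def algebra_simps)
qed

theorem theorem2p7:
  fixes f :: "'a::{finite,field} \<Rightarrow> 'a" and d :: nat
  assumes "diff_uniform f d"
  shows "(\<Sum>r=1..d. r * (d + 1 - r) * M r f) \<ge> d
    \<and> (\<Sum>r=1..d+1. r * (d + 2 - r) * M r f) \<ge> card (UNIV :: 'a set) + d
    \<and> ((\<Sum>r=1..d. r * (d + 1 - r) * M r f) = d \<longleftrightarrow>
           (N f = (d + 1) * card (UNIV :: 'a set) - d \<and> (\<forall>r. r \<ge> d + 2 \<longrightarrow> M r f = 0)))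
    \<and> ((\<Sum>r=1..d+1. r * (d + 2 - r) * M r f) = card (UNIV :: 'a set) + d \<longleftrightarrow>
           (N f = (d + 1) * card (UNIV :: 'a set) - d \<and> (\<forall>r. r > d + 2 \<longrightarrow> M r f = 0)))
    \<and> ((\<Sum>r=1..d+1. r * (d + 2 - r) * M r f) = card (UNIV :: 'a set) + d \<longrightarrow>
           (\<Sum>r=1..d. r * (d + 1 - r) * M r f) = (d + 2) * M (d + 2) f + d)"
proof -
  define q where "q = card (UNIV :: 'a set)"
  define S1 where "S1 = (\<Sum>r=1..d. r * (d + 1 - r) * M r f)"
  define S2 where "S2 = (\<Sum>r=1..d+1. r * (d + 2 - r) * M r f)"
  define E1 where "E1 = (\<Sum>y\<in>UNIV. E d (card (f -` {y})))"
  define E2 where "E2 = (\<Sum>y\<in>UNIV. E (d+1) (card (f -` {y})))"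
  have q1: "q \<ge> 1" unfolding q_def by (simp add: Suc_le_eq card_gt_0_iff)
  have NB: "N f \<le> q + (q - 1) * d" unfolding q_def by (rule N_bound[OF assms])
  have NBi: "int (N f) \<le> int (d + 1) * int q - int d"
  proof -
    have "(q - 1) * d = q * d - d" by (simp add: diff_mult_distrib)
    moreover have "d \<le> q * d" using q1 by simp
    ultimately have "N f + d \<le> q * d + q" using NB by linarith
    then have "int (N f) + int d \<le> int q * int d + int q"
      by (metis of_nat_add of_nat_le_iff of_nat_mult)
    then show ?thesis by (simp add: algebra_simps)
  qed
  have s1: "int S1 = int (d + 1) * int q - int (N f) + E1"
    unfolding S1_def E1_def q_def by (rule main_sum)
  have s2: "int S2 = int (d + 1 + 1) * int q - int (N f) + E2"
    unfolding S2_def E2_def q_def using main_sum[of "d+1" f] by simp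
  have E1nn: "E1 \<ge> 0" unfolding E1_def by (intro sum_nonneg) (rule E_nonneg)
  have E2nn: "E2 \<ge> 0" unfolding E2_def by (intro sum_nonneg) (rule E_nonneg)
  have E1z: "E1 = 0 \<longleftrightarrow> (\<forall>r. r \<ge> d + 2 \<longrightarrow> M r f = 0)"
    unfolding E1_def E_zero_iff by (auto simp: Suc_le_eq)
  have E2z: "E2 = 0 \<longleftrightarrow> (\<forall>r. r > d + 2 \<longrightarrow> M r f = 0)"
    unfolding E2_def E_zero_iff by simp
  have Neq: "N f = (d + 1) * q - d \<longleftrightarrow> int (N f) = int (d + 1) * int q - int d"
  proof -
    have "(d + 1) * 1 \<le> (d + 1) * q" using q1 by (rule mult_le_mono2)
    then have dq: "d \<le> (d + 1) * q" by simp
    have "N f = (d + 1) * q - d \<longleftrightarrow> int (N f) = int ((d + 1) * q - d)"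
      by (rule of_nat_eq_iff[symmetric])
    also have "int ((d + 1) * q - d) = int ((d + 1) * q) - int d" by (rule of_nat_diff[OF dq])
    also have "int ((d + 1) * q) = int (d + 1) * int q" by (rule of_nat_mult)
    finally show ?thesis .
  qed
  have c1: "S1 \<ge> d" using s1 NBi E1nn by linarith
  have c2: "S2 \<ge> q + d" using s2 NBi E2nn by (simp add: algebra_simps)
  have c3: "S1 = d \<longleftrightarrow> (N f = (d + 1) * q - d \<and> (\<forall>r. r \<ge> d + 2 \<longrightarrow> M r f = 0))"
    unfolding Neq E1z[symmetric] of_nat_eq_iff[symmetric, of S1 d] using s1 NBi E1nn
    by (intro iffI; (elim conjE)?; (intro conjI)?; linarith)
  have c4: "S2 = q + d \<longleftrightarrow> (N f = (d + 1) * q - d \<and> (\<forall>r. r > d + 2 \<longrightarrow> M r f = 0))"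
      proof -
    have e: "S2 = q + d \<longleftrightarrow> int S2 = int q + int d" by (metis of_nat_add of_nat_eq_iff)
    have s2': "int S2 = int d * int q + 2 * int q - int (N f) + E2" using s2 by (simp add: algebra_simps)
    have n': "int (N f) = int (d + 1) * int q - int d \<longleftrightarrow> int (N f) = int d * int q + int q - int d"
      by (simp add: algebra_simps)
    have NBi': "int (N f) \<le> int d * int q + int q - int d" using NBi by (simp add: algebra_simps)
    show ?thesis unfolding Neq E2z[symmetric] e n' using s2' NBi' E2nn
      by (intro iffI; (elim conjE)?; (intro conjI)?; linarith)
  qed
  have c5: "S1 = (d + 2) * M (d + 2) f + d" if "S2 = q + d"
  proof -
    from that c4 have n: "int (N f) = int (d + 1) * int q - int d" and
      m: "\<forall>r. r > d + 2 \<longrightarrow> M r f = 0" using Neq by auto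
    have "\<forall>y. card (f -` {y}) \<le> d + 2"
    proof
      fix y
      show "card (f -` {y}) \<le> d + 2"
      proof (rule ccontr)
        assume "\<not> ?thesis"
        then have "M (card (f -` {y})) f = 0" using m by auto
        moreover have "finite {z. card (f -` {z}) = card (f -` {y})}" by simp
        moreover have "y \<in> {z. card (f -` {z}) = card (f -` {y})}" by simp
        ultimately show False unfolding M_def by (metis card_0_eq empty_iff)
      qed
    qed
    then have "E1 = int ((d + 2) * M (d + 2) f)" unfolding E1_def by (rule E_last)
    then have "int S1 = int ((d + 2) * M (d + 2) f + d)" using s1 n by simp
    then show ?thesis by (simp only: of_nat_eq_iff)
  qed
  show ?thesis using c1 c2 c3 c4 c5 unfolding S1_def S2_def q_def by blast
qed

end
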